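(* Let $p$ be any prime and $G=Z_{p^{\lambda_1}}\times\cdots\times Z_{p^{\lambda_n}}$ with $0<\lambda_1<\lambda_2<\cdots<\lambda_n$ (no repeated factors), and let $\mathbf a$ be a canonical tuple of $G$. Then $$O(\mathbf a)=\bigcup\{T(\mathbf b):\mathbf b\le\mathbf a\text{ and } b_i=a_i\text{ for each nondegenerate coordinate } i \text{ of }\mathbf a\}.$$
   Context: Set $\lambda_0=0$ and $a_0=0$ for any tuple. Tuples are ordered componentwise; $\Lambda(G)=\{\mathbf a\in\mathbb Z^n:\mathbf 0\le\mathbf a\le(\lambda_1,\dots,\lambda_n)\}$. For $\mathbf a\in\Lambda(G)$, $T(\mathbf a)$ is the set of $(g_1,\dots,g_n)\in G$ with $|g_i|=p^{a_i}$ for all $i$, and $O(\mathbf a)$ is the $\mathrm{Aut}(G)$-orbit containing $T(\mathbf a)$ (each type lies in a single orbit). A tuple $\mathbf a$ is canonical if (I) $a_i\ge a_{i-1}$ for $i\in\{2,\dots,n\}$ and (II) $a_{i+1}-a_i\le\lambda_{i+1}-\lambda_i$ for $i\in\{1,\dots,n-1\}$. A canonical $\mathbf a$ is degenerate at coordinate $i$ if $a_i=a_{i-1}$, or ($i\le n-1$ and) $a_{i+1}-a_i=\lambda_{i+1}-\lambda_i$; otherwise $i$ is nondegenerate. *)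

theory Defs
  imports "HOL-Computational_Algebra.Primes" "HOL-Algebra.Product_Groups" "HOL-Algebra.Elementary_Groups" "HOL-Algebra.Multiplicative_Group"
begin

definition abgrp :: "nat \<Rightarrow> nat \<Rightarrow> (nat \<Rightarrow> nat) \<Rightarrow> (nat \<Rightarrow> int) monoid" where
  "abgrp p n lam = product_group {1..n} (\<lambda>i. integer_mod_group (p ^ lam i))"

definition typeset :: "nat \<Rightarrow> nat \<Rightarrow> (nat \<Rightarrow> nat) \<Rightarrow> (nat \<Rightarrow> nat) \<Rightarrow> (nat \<Rightarrow> int) set" where
  "typeset p n lam a = {g \<in> carrier (abgrp p n lam).
      \<forall>i\<in>{1..n}. group.ord (integer_mod_group (p ^ lam i)) (g i) = p ^ a i}"

definition aut_orbit :: "('a, 'b) monoid_scheme \<Rightarrow> 'a \<Rightarrow> 'a set" where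
  "aut_orbit G x = (\<lambda>\<phi>. \<phi> x) ` iso G G"

definition canonical :: "nat \<Rightarrow> (nat \<Rightarrow> nat) \<Rightarrow> (nat \<Rightarrow> nat) \<Rightarrow> bool" where
  "canonical n lam a \<longleftrightarrow>
     (\<forall>i\<in>{1..n}. a i \<le> lam i) \<and>
     (\<forall>i\<in>{2..n}. a (i - 1) \<le> a i) \<and>
     (\<forall>i\<in>{1..<n}. a (i + 1) - a i \<le> lam (i + 1) - lam i)"

definition degenerate :: "nat \<Rightarrow> (nat \<Rightarrow> nat) \<Rightarrow> (nat \<Rightarrow> nat) \<Rightarrow> nat \<Rightarrow> bool" where
  "degenerate n lam a i \<longleftrightarrow>
     a i = (if i = 1 then 0 else a (i - 1)) \<or>
     (i \<le> n - 1 \<and> a (i + 1) - a i = lam (i + 1) - lam i)"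

end

theory Submission imports Defs begin

locale abg =
  fixes p n :: nat and lam :: "nat \<Rightarrow> nat"
  assumes prime: "prime p" and lam1: "0 < lam 1"
    and incr: "\<forall>i\<in>{1..<n}. lam i < lam (i + 1)"
begin

abbreviation "P \<equiv> int p"
abbreviation "M i \<equiv> int p ^ lam i"
abbreviation "G \<equiv> abgrp p n lam"
abbreviation "Z i \<equiv> integer_mod_group (p ^ lam i)"

lemma p2: "p \<ge> 2" using prime prime_ge_2_nat by blast
lemma Ppos: "P > 1" using p2 by simp
lemma primeP: "prime P" using prime by (simp add: prime_nat_int_transfer)

lemma lam_less: "i \<in> {1..n} \<Longrightarrow> j \<in> {1..n} \<Longrightarrow> i < j \<Longrightarrow> lam i < lam j"
proof (induction j)
  case 0 then show ?case by simp
next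
  case (Suc j)
  then have "j \<in> {1..<n}" if "i < j" using that by auto
  moreover have "i \<le> j" using Suc by simp
  ultimately show ?case using Suc incr
    by (metis Suc_eq_plus1 atLeastAtMost_iff atLeastLessThan_iff le_less less_trans)
qed

lemma lam_le: "i \<in> {1..n} \<Longrightarrow> j \<in> {1..n} \<Longrightarrow> i \<le> j \<Longrightarrow> lam i \<le> lam j"
  using lam_less by (metis le_less)

lemma lam_pos: "i \<in> {1..n} \<Longrightarrow> 0 < lam i"
  using lam_le[of 1 i] lam1 by (cases "n = 0") auto

lemma M_gt1: "i \<in> {1..n} \<Longrightarrow> M i > 1"
  using lam_pos Ppos by (simp add: one_less_power)

lemma carrierZ: "i \<in> {1..n} \<Longrightarrow> carrier (Z i) = {0..<M i}"
  using p2 by (simp add: carrier_integer_mod_group)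

lemma carrierG: "carrier G = (\<Pi>\<^sub>E i\<in>{1..n}. {0..<M i})"
  unfolding abgrp_def carrier_product_group by (rule PiE_cong) (use carrierZ in auto)

lemma groupG: "group G" by (simp add: abgrp_def)

lemma multG: "x \<otimes>\<^bsub>G\<^esub> y = (\<lambda>i\<in>{1..n}. (x i + y i) mod M i)"
  by (simp add: abgrp_def)

lemma oneG: "\<one>\<^bsub>G\<^esub> = (\<lambda>i\<in>{1..n}. 0)"
  by (simp add: abgrp_def)

lemma finG: "finite (carrier G)"
  by (simp add: carrierG finite_PiE)

lemma powG: "x \<in> carrier G \<Longrightarrow> x [^]\<^bsub>G\<^esub> (k::nat) = (\<lambda>i\<in>{1..n}. (int k * x i) mod M i)"
proof (induction k)
  case 0 then show ?case by (simp add: oneG)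
next
  case (Suc k)
  have "x [^]\<^bsub>G\<^esub> Suc k = x [^]\<^bsub>G\<^esub> k \<otimes>\<^bsub>G\<^esub> x" by simp
  also have "\<dots> = (\<lambda>i\<in>{1..n}. (int (Suc k) * x i) mod M i)"
    using Suc by (auto intro!: restrict_ext simp: multG mod_add_left_eq mod_add_right_eq distrib_right add.commute)
  finally show ?case .
qed


lemma ordZ_dvd:
  assumes "i \<in> {1..n}" "w \<in> {0..<M i}"
  shows "group.ord (Z i) w dvd p ^ e \<longleftrightarrow> M i dvd P ^ e * w"
proof -
  interpret Zi: group "Z i" by simp
  have wc: "w \<in> carrier (Z i)" using assms carrierZ by simp
  have "w [^]\<^bsub>Z i\<^esub> (p ^ e) = (int (p ^ e) * w) mod int (p ^ lam i)"
    by (rule pow_integer_mod_group)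
  then have "w [^]\<^bsub>Z i\<^esub> (p ^ e) = (P ^ e * w) mod M i" by simp
  with Zi.pow_eq_id[OF wc, of "p ^ e"] show ?thesis
    by (simp add: dvd_eq_mod_eq_0)
qed

lemma ordZ_ex:
  assumes "i \<in> {1..n}" "w \<in> {0..<M i}"
  shows "\<exists>f\<le>lam i. group.ord (Z i) w = p ^ f"
proof -
  interpret Zi: group "Z i" by simp
  have wc: "w \<in> carrier (Z i)" using assms carrierZ by simp
  have "order (Z i) = card {0..<M i}" using carrierZ[OF assms(1)] by (simp add: order_def)
  also have "\<dots> = p ^ lam i" by (simp add: nat_power_eq)
  finally have "Zi.ord w dvd p ^ lam i" using Zi.ord_dvd_group_order[OF wc] by simp
  then show ?thesis using divides_primepow_nat[OF prime] by blast
qed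

lemma ordZ_eq:
  assumes "i \<in> {1..n}" "w \<in> {0..<M i}" "group.ord (Z i) w = p ^ f"
  shows "M i dvd P ^ e * w \<longleftrightarrow> f \<le> e"
  using ordZ_dvd[OF assms(1,2), of e] assms(3) p2 by (simp add: dvd_power_iff_le)

lemma D1:
  assumes "e \<le> k" "P ^ k dvd P ^ e * w"
  shows "P ^ (k - e) dvd w"
proof -
  have "P ^ k = P ^ e * P ^ (k - e)" using assms(1) by (simp flip: power_add)
  then show ?thesis using assms(2) Ppos by simp
qed

lemma D2:
  assumes "P ^ j dvd w" "k \<le> e + j"
  shows "P ^ k dvd P ^ e * w"
proof -
  have "P ^ (e + j) dvd P ^ e * w" using assms(1) by (simp add: power_add mult_dvd_mono)
  moreover have "P ^ k dvd P ^ (e + j)" using assms(2) by (simp add: le_imp_power_dvd)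
  ultimately show ?thesis using dvd_trans by blast
qed

lemma EX:
  assumes "0 < e" "e \<le> k" "P ^ k dvd P ^ e * w" "\<not> P ^ k dvd P ^ (e - 1) * w"
  shows "\<exists>r. w = P ^ (k - e) * r \<and> \<not> P dvd r"
proof -
  obtain r where r: "w = P ^ (k - e) * r" using D1[OF assms(2,3)] by blast
  have "\<not> P dvd r"
  proof
    assume "P dvd r"
    then have "P ^ (k - e + 1) dvd w" using r by (simp add: mult_dvd_mono)
    then have "P ^ k dvd P ^ (e - 1) * w" by (rule D2) (use assms in auto)
    with assms(4) show False by simp
  qed
  with r show ?thesis by blast
qed


lemma dvd_mult_mod: "(m::int) dvd q * x \<Longrightarrow> m dvd q * (x mod m)"
proof -
  assume h: "m dvd q * x"
  have "q * (x mod m) = q * x - m * (q * (x div m))"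
    by (simp add: minus_div_mult_eq_mod[symmetric] algebra_simps)
  then show ?thesis using h by simp
qed

definition ev :: "nat \<Rightarrow> nat \<Rightarrow> int" where "ev j = (\<lambda>l\<in>{1..n}. if l = j then 1 else 0)"
definition sv :: "nat \<Rightarrow> int \<Rightarrow> nat \<Rightarrow> int" where "sv j w = (\<lambda>l\<in>{1..n}. if l = j then w else 0)"
definition pv :: "nat \<Rightarrow> (nat \<Rightarrow> int) \<Rightarrow> nat \<Rightarrow> int" where "pv k z = (\<lambda>l\<in>{1..n}. if l \<le> k then z l else 0)"

lemma M_pos: "0 < M i" using Ppos by simp

lemma ev_carrier: "j \<in> {1..n} \<Longrightarrow> ev j \<in> carrier G"
  using M_gt1 p2 by (auto simp: carrierG ev_def)

lemma sv_carrier: "w \<in> {0..<M j} \<Longrightarrow> sv j w \<in> carrier G"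
  using M_pos by (auto simp: carrierG sv_def)

lemma pv_carrier: "z \<in> carrier G \<Longrightarrow> pv k z \<in> carrier G"
  using M_pos by (auto simp: carrierG pv_def PiE_iff)

lemma sv_pow: "j \<in> {1..n} \<Longrightarrow> w \<in> {0..<M j} \<Longrightarrow> sv j w = ev j [^]\<^bsub>G\<^esub> nat w"
  apply (subst powG[OF ev_carrier], assumption)
  apply (auto intro!: restrict_ext simp: sv_def ev_def)
  done

lemma ev_pow_order: "j \<in> {1..n} \<Longrightarrow> ev j [^]\<^bsub>G\<^esub> (p ^ lam j) = \<one>\<^bsub>G\<^esub>"
  by (simp add: powG ev_carrier oneG) (auto intro!: restrict_ext simp: ev_def)

lemma pv_0: "pv 0 z = \<one>\<^bsub>G\<^esub>"
  by (auto intro!: restrict_ext simp: pv_def oneG)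

lemma pv_Suc: "z \<in> carrier G \<Longrightarrow> Suc k \<le> n \<Longrightarrow> pv (Suc k) z = pv k z \<otimes>\<^bsub>G\<^esub> sv (Suc k) (z (Suc k))"
  by (auto intro!: restrict_ext simp: pv_def sv_def multG carrierG PiE_iff)

lemma pv_Suc2: "n < Suc k \<Longrightarrow> pv (Suc k) z = pv k z"
  by (auto intro!: restrict_ext simp: pv_def)

lemma pv_n: "z \<in> carrier G \<Longrightarrow> pv n z = z"
  by (auto intro!: extensionalityI[of _ "{1..n}"] simp: pv_def carrierG PiE_iff)

lemma key:
  assumes f: "f \<in> hom G G" and z: "z \<in> carrier G" and i: "i \<in> {1..n}"
    and tz: "\<forall>j\<in>{1..n}. M j dvd P ^ t j * z j"
    and tl: "\<forall>j\<in>{1..n}. t j \<le> lam j"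
    and te: "\<forall>j\<in>{1..n}. t j \<le> e \<or> lam i + t j \<le> e + lam j"
  shows "M i dvd P ^ e * f z i"
proof -
  define c where "c j = f (ev j) i" for j
  have fc: "f x \<in> carrier G" if "x \<in> carrier G" for x using f that by (auto simp: hom_def)
  have c1: "M i dvd P ^ lam j * c j" if j: "j \<in> {1..n}" for j
  proof -
    have "f (ev j [^]\<^bsub>G\<^esub> (p ^ lam j)) = f (ev j) [^]\<^bsub>G\<^esub> (p ^ lam j)"
      using hom_nat_pow[OF f ev_carrier[OF j] groupG groupG] .
    moreover have "f (ev j [^]\<^bsub>G\<^esub> (p ^ lam j)) = \<one>\<^bsub>G\<^esub>"
      using ev_pow_order[OF j] hom_one[OF f groupG groupG] by simp
    ultimately have "f (ev j) [^]\<^bsub>G\<^esub> (p ^ lam j) = \<one>\<^bsub>G\<^esub>" by simp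
    then have "(f (ev j) [^]\<^bsub>G\<^esub> (p ^ lam j)) i = 0" using i by (simp add: oneG)
    moreover have "(f (ev j) [^]\<^bsub>G\<^esub> (p ^ lam j)) i = (int (p ^ lam j) * c j) mod M i"
      apply (subst powG[OF fc[OF ev_carrier[OF j]]])
      using i by (simp add: c_def)
    ultimately have "(P ^ lam j * c j) mod M i = 0" by simp
    then show ?thesis by (simp add: dvd_eq_mod_eq_0)
  qed
  have c2: "f (sv j w) i = (w * c j) mod M i" if j: "j \<in> {1..n}" and w: "w \<in> {0..<M j}" for j w
  proof -
    have "f (sv j w) = f (ev j) [^]\<^bsub>G\<^esub> nat w"
      using sv_pow[OF j w] hom_nat_pow[OF f ev_carrier[OF j] groupG groupG] by simp
    also have "\<dots> = (\<lambda>l\<in>{1..n}. (int (nat w) * f (ev j) l) mod M l)"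
      by (rule powG[OF fc[OF ev_carrier[OF j]]])
    finally show ?thesis using i w by (simp add: c_def)
  qed
  have c3: "M i dvd P ^ e * (z j * c j)" if j: "j \<in> {1..n}" for j
  proof (cases "t j \<le> e")
    case True
    have "M j dvd P ^ e * z j"
      using tz j True by (meson dvd_mult_left dvd_trans le_imp_power_dvd mult_dvd_mono dvd_refl)
    then obtain q where q: "P ^ e * z j = M j * q" by blast
    have "P ^ e * (z j * c j) = q * (P ^ lam j * c j)" using q by (simp add: algebra_simps)
    then show ?thesis using c1[OF j] by (metis dvd_mult2 mult.commute)
  next
    case False
    then have le: "lam i + t j \<le> e + lam j" using te j by auto
    have "P ^ (lam j - t j) dvd z j" using D1[of "t j" "lam j" "z j"] tz tl j by auto
    then have "M i dvd P ^ e * z j" by (rule D2) (use le tl j in auto)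
    then show ?thesis by (simp add: mult.assoc[symmetric])
  qed
  have c4: "M i dvd P ^ e * f (pv k z) i" for k
  proof (induction k)
    case 0
    have "f (pv 0 z) i = 0" using hom_one[OF f groupG groupG] i by (simp only: pv_0) (simp add: oneG)
    then show ?case by simp
  next
    case (Suc k)
    show ?case
    proof (cases "Suc k \<le> n")
      case True
      have j: "Suc k \<in> {1..n}" using True by auto
      have zk: "z (Suc k) \<in> {0..<M (Suc k)}" using z j by (auto simp: carrierG PiE_iff)
      have "f (pv (Suc k) z) = f (pv k z) \<otimes>\<^bsub>G\<^esub> f (sv (Suc k) (z (Suc k)))"
        using pv_Suc[OF z True] hom_mult[OF f pv_carrier[OF z] sv_carrier[OF zk]] by simp
      then have "f (pv (Suc k) z) i = (f (pv k z) i + (z (Suc k) * c (Suc k)) mod M i) mod M i"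
        using i c2[OF j zk] by (simp add: multG)
      also have "\<dots> = (f (pv k z) i + z (Suc k) * c (Suc k)) mod M i" by (simp add: mod_add_right_eq)
      finally show ?thesis using Suc.IH c3[OF j]
        by (simp add: dvd_mult_mod distrib_left)
    next
      case False then show ?thesis using Suc.IH by (simp add: pv_Suc2)
    qed
  qed
  show ?thesis using c4[of n] pv_n[OF z] by simp
qed

lemma eq_of_dvd: "0 \<le> x \<Longrightarrow> x < c \<Longrightarrow> 0 \<le> y \<Longrightarrow> y < c \<Longrightarrow> (c::int) dvd x - y \<Longrightarrow> x = y"
  by (metis mod_eq_dvd_iff mod_pos_pos_trivial)

lemma unit_cancel: "coprime u c \<Longrightarrow> (c::int) dvd u * d \<Longrightarrow> c dvd d"
  by (metis coprime_commute coprime_dvd_mult_right_iff)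

lemma dvd_mod_diff: "(c::int) dvd x mod c - x"
proof -
  have "x mod c - x = - (c * (x div c))" by (simp add: minus_div_mult_eq_mod[symmetric] algebra_simps)
  then show ?thesis by simp
qed

lemma phi_iso:
  fixes u m :: "nat \<Rightarrow> int" and s :: "nat \<Rightarrow> nat" and NN :: "nat set"
  assumes NN: "NN \<subseteq> {1..n}"
    and u: "\<forall>i\<in>{1..n}. coprime (u i) (M i)"
    and m: "\<forall>i\<in>{1..n}. m i \<noteq> 0 \<longrightarrow> s i \<in> NN \<and> M i dvd m i * M (s i)"
    and mN: "\<forall>i\<in>NN. m i = 0"
  shows "(\<lambda>z. \<lambda>i\<in>{1..n}. (u i * z i + m i * z (s i)) mod M i) \<in> iso G G"
proof -
  define \<phi> where "\<phi> = (\<lambda>z. \<lambda>i\<in>{1..n}. (u i * z i + m i * z (s i)) mod M i)"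
  have cl: "\<phi> x \<in> carrier G" for x
    using M_pos by (auto simp: \<phi>_def carrierG)
  have hom: "\<phi> \<in> hom G G"
  proof (rule homI)
    show "\<phi> x \<in> carrier G" for x by (rule cl)
    fix x y assume x: "x \<in> carrier G" and y: "y \<in> carrier G"
    show "\<phi> (x \<otimes>\<^bsub>G\<^esub> y) = \<phi> x \<otimes>\<^bsub>G\<^esub> \<phi> y"
      unfolding multG \<phi>_def
    proof (intro restrict_ext)
      fix i assume i: "i \<in> {1..n}"
      define Y' where "Y' = (\<lambda>i\<in>{1..n}. (x i + y i) mod M i) (s i)"
      have mY: "M i dvd m i * (Y' - (x (s i) + y (s i)))"
      proof (cases "m i = 0")
        case False
        then have si0: "s i \<in> NN" and dv: "M i dvd m i * M (s i)" using m i by auto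
        then have si: "s i \<in> {1..n}" using NN by blast
        have E: "Y' - (x (s i) + y (s i)) = - (M (s i) * ((x (s i) + y (s i)) div M (s i)))"
          using si by (simp add: Y'_def minus_div_mult_eq_mod[symmetric] algebra_simps)
        have "m i * (Y' - (x (s i) + y (s i))) = - ((m i * M (s i)) * ((x (s i) + y (s i)) div M (s i)))"
          by (subst E) (simp add: algebra_simps)
        then show ?thesis using dv by simp
      qed simp
      have uY: "M i dvd u i * ((x i + y i) mod M i - (x i + y i))"
        using dvd_mod_diff by simp
      have "M i dvd (u i * ((x i + y i) mod M i) + m i * Y') - (u i * x i + m i * x (s i) + (u i * y i + m i * y (s i)))"
        using dvd_add[OF uY mY] by (simp add: algebra_simps)
      then have "(u i * ((x i + y i) mod M i) + m i * Y') mod M i = (u i * x i + m i * x (s i) + (u i * y i + m i * y (s i))) mod M i"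
        by (simp add: mod_eq_dvd_iff)
      then show "(u i * (\<lambda>i\<in>{1..n}. (x i + y i) mod M i) i + m i * (\<lambda>i\<in>{1..n}. (x i + y i) mod M i) (s i)) mod M i =
         ((\<lambda>i\<in>{1..n}. (u i * x i + m i * x (s i)) mod M i) i + (\<lambda>i\<in>{1..n}. (u i * y i + m i * y (s i)) mod M i) i) mod M i"
        using i by (simp add: Y'_def mod_add_eq)
    qed
  qed
  have inj: "inj_on \<phi> (carrier G)"
  proof (rule inj_onI)
    fix x y assume x: "x \<in> carrier G" and y: "y \<in> carrier G" and e: "\<phi> x = \<phi> y"
    have comp: "(u i * x i + m i * x (s i)) mod M i = (u i * y i + m i * y (s i)) mod M i" if "i \<in> {1..n}" for i
      using fun_cong[OF e, of i] that by (simp add: \<phi>_def)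
    have xr: "0 \<le> x i" "x i < M i" "0 \<le> y i" "y i < M i" if "i \<in> {1..n}" for i
      using x y that by (auto simp: carrierG PiE_iff)
    have step: "x i = y i" if i: "i \<in> {1..n}" and ms: "m i * x (s i) = m i * y (s i)" for i
    proof -
      have "M i dvd (u i * x i + m i * x (s i)) - (u i * y i + m i * y (s i))"
        using comp[OF i] by (simp add: mod_eq_dvd_iff)
      then have "M i dvd u i * (x i - y i)" using ms by (simp add: algebra_simps)
      then have "M i dvd x i - y i" using unit_cancel u i by blast
      then show ?thesis using eq_of_dvd xr[OF i] by blast
    qed
    have xN: "x j = y j" if "j \<in> NN" for j
      using step[of j] that NN mN by auto
    have "x i = y i" if "i \<in> {1..n}" for i
      using step[OF that] m xN that by (cases "m i = 0") auto
    then show "x = y" using x y by (intro extensionalityI[of _ "{1..n}"]) (auto simp: carrierG PiE_iff)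
  qed
  have "\<phi> ` carrier G = carrier G" using endo_inj_surj[OF finG _ inj] cl by blast
  then show ?thesis using hom inj unfolding \<phi>_def[symmetric] by (auto simp: iso_def bij_betw_def)
qed

lemma tdvd:
  assumes "x \<in> typeset p n lam b" "i \<in> {1..n}"
  shows "M i dvd P ^ e * x i \<longleftrightarrow> b i \<le> e"
proof -
  have "x i \<in> {0..<M i}" using assms by (auto simp: typeset_def carrierG PiE_iff)
  moreover have "group.ord (Z i) (x i) = p ^ b i" using assms by (auto simp: typeset_def)
  ultimately show ?thesis using ordZ_eq assms(2) by blast
qed

lemma inv_mod:
  assumes "\<not> P dvd r" "0 < k"
  shows "\<exists>v w. \<not> P dvd v \<and> v * r = 1 + w * P ^ k"
proof -
  have "coprime r (P ^ k)" using prime_imp_power_coprime[OF primeP assms(1)] .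
  then have g: "gcd r (P ^ k) = 1" by simp
  obtain v w where vw: "v * r + w * P ^ k = gcd r (P ^ k)" using bezout_int by blast
  then have e: "v * r = 1 + (- w) * P ^ k" using g by simp
  have "\<not> P dvd v"
  proof
    assume "P dvd v"
    then have "P dvd v * r" by simp
    moreover have "P dvd (- w) * P ^ k" using assms(2) by (simp add: dvd_power)
    ultimately have "P dvd 1" using e by (metis dvd_add_left_iff)
    then show False using Ppos by simp
  qed
  then show ?thesis using e by blast
qed

lemma coprime_of: "\<not> P dvd u \<Longrightarrow> coprime u (M i)"
  using prime_imp_power_coprime[OF primeP] by blast

lemma carrier_range: "x \<in> carrier G \<Longrightarrow> i \<in> {1..n} \<Longrightarrow> 0 \<le> x i \<and> x i < M i"
  by (auto simp: carrierG PiE_iff)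
end

locale abga = abg +
  fixes a :: "nat \<Rightarrow> nat"
  assumes canon: "canonical n lam a"
begin

definition "N = {i\<in>{1..n}. \<not> degenerate n lam a i}"

lemma a_le: "i \<in> {1..n} \<Longrightarrow> a i \<le> lam i"
  using canon by (simp add: canonical_def)

lemma a_step: "i \<in> {1..<n} \<Longrightarrow> a i \<le> a (i + 1)"
proof -
  assume i: "i \<in> {1..<n}"
  then have "i + 1 \<in> {2..n}" by auto
  then have "a (i + 1 - 1) \<le> a (i + 1)" using canon unfolding canonical_def by blast
  then show ?thesis by simp
qed

lemma a_step2: "i \<in> {1..<n} \<Longrightarrow> a (i + 1) + lam i \<le> a i + lam (i + 1)"
proof -
  assume i: "i \<in> {1..<n}"
  have "a (i + 1) - a i \<le> lam (i + 1) - lam i" using canon i by (simp add: canonical_def)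
  moreover have "lam i < lam (i + 1)" using incr i by blast
  moreover have "a i \<le> a (i + 1)" using a_step i by blast
  ultimately show ?thesis by linarith
qed

lemma C1: "i \<in> {1..n} \<Longrightarrow> j \<in> {1..n} \<Longrightarrow> i \<le> j \<Longrightarrow> a i \<le> a j"
proof (induction j)
  case 0 then show ?case by simp
next
  case (Suc j)
  show ?case
  proof (cases "i = Suc j")
    case False
    then have "i \<le> j" "j \<in> {1..<n}" using Suc.prems by auto
    then show ?thesis using Suc a_step[of j] by auto
  qed simp
qed

lemma C2: "i \<in> {1..n} \<Longrightarrow> j \<in> {1..n} \<Longrightarrow> i \<le> j \<Longrightarrow> a j + lam i \<le> a i + lam j"
proof (induction j)
  case 0 then show ?case by simp
next
  case (Suc j)
  show ?case
  proof (cases "i = Suc j")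
    case False
    then have "i \<le> j" "j \<in> {1..<n}" using Suc.prems by auto
    then show ?thesis using Suc a_step2[of j] by auto
  qed simp
qed

lemma deg_iff: "i \<in> {1..n} \<Longrightarrow> degenerate n lam a i \<longleftrightarrow>
   (i = 1 \<and> a 1 = 0) \<or> (1 < i \<and> a i = a (i - 1)) \<or> (i < n \<and> a (i + 1) + lam i = a i + lam (i + 1))"
proof -
  assume i: "i \<in> {1..n}"
  have "i < n \<Longrightarrow> (a (i + 1) - a i = lam (i + 1) - lam i) \<longleftrightarrow> a (i + 1) + lam i = a i + lam (i + 1)"
  proof -
    assume "i < n"
    then have "i \<in> {1..<n}" using i by auto
    then have "a i \<le> a (i + 1)" "lam i < lam (i + 1)" using a_step incr by auto
    then show ?thesis by linarith
  qed
  then show ?thesis using i unfolding degenerate_def by auto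
qed

lemma C5: "i \<in> N \<Longrightarrow> 0 < a i"
proof (rule ccontr)
  assume i: "i \<in> N" and "\<not> 0 < a i"
  then have a0: "a i = 0" by simp
  have i1: "i \<in> {1..n}" using i by (simp add: N_def)
  show False
  proof (cases "i = 1")
    case True then show False using i a0 deg_iff[OF i1] by (simp add: N_def)
  next
    case False
    then have "a (i - 1) \<le> a i" by (intro C1) (use i1 False in auto)
    then show False using i a0 deg_iff[OF i1] False i1 by (auto simp: N_def)
  qed
qed

lemma C3: "i \<in> N \<Longrightarrow> i < j \<Longrightarrow> j \<le> n \<Longrightarrow> a j + lam i + 1 \<le> a i + lam j"
proof -
  assume i: "i \<in> N" and ij: "i < j" "j \<le> n"
  have i1: "i \<in> {1..n}" using i by (simp add: N_def)
  have "a (i + 1) + lam i \<noteq> a i + lam (i + 1)" using i ij deg_iff[OF i1] by (auto simp: N_def)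
  then have "a (i + 1) + lam i + 1 \<le> a i + lam (i + 1)" using a_step2[of i] i1 ij by fastforce
  moreover have "a j + lam (i + 1) \<le> a (i + 1) + lam j" using C2[of "i + 1" j] i1 ij by auto
  ultimately show ?thesis by linarith
qed

lemma C4: "i \<in> N \<Longrightarrow> 1 \<le> j \<Longrightarrow> j < i \<Longrightarrow> a j + 1 \<le> a i"
proof -
  assume i: "i \<in> N" and ij: "1 \<le> j" "j < i"
  have i1: "i \<in> {1..n}" using i by (simp add: N_def)
  have "a i \<noteq> a (i - 1)" using i ij deg_iff[OF i1] by (auto simp: N_def)
  moreover have "a (i - 1) \<le> a i" by (intro C1) (use i1 ij in auto)
  moreover have "a j \<le> a (i - 1)" using C1[of j "i - 1"] i1 ij by auto
  ultimately show ?thesis by linarith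
qed


lemma N_sub: "N \<subseteq> {1..n}" by (auto simp: N_def)

lemma LeftChain: "i \<in> {1..n} \<Longrightarrow> 0 < a i \<Longrightarrow>
  (\<exists>j\<in>N. j \<le> i \<and> a j = a i) \<or> (i < n \<and> a (i + 1) + lam i = a i + lam (i + 1))"
proof (induction i rule: less_induct)
  case (less i)
  show ?case
  proof (cases "i \<in> N")
    case True then show ?thesis by blast
  next
    case False
    then have "degenerate n lam a i" using less.prems by (simp add: N_def)
    then have d: "(i = 1 \<and> a 1 = 0) \<or> (1 < i \<and> a i = a (i - 1)) \<or> (i < n \<and> a (i + 1) + lam i = a i + lam (i + 1))"
      using deg_iff less.prems by blast
    show ?thesis
    proof (cases "1 < i \<and> a i = a (i - 1)")
      case True
      have i1: "i - 1 \<in> {1..n}" "i - 1 < i" using True less.prems by auto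
      have ll: "lam (i - 1) < lam i" using lam_less[of "i - 1" i] i1 less.prems by auto
      from less.IH[OF i1(2) i1(1)] True less.prems
      have "(\<exists>j\<in>N. j \<le> i - 1 \<and> a j = a (i - 1)) \<or> (i - 1 < n \<and> a (i - 1 + 1) + lam (i - 1) = a (i - 1) + lam (i - 1 + 1))"
        by simp
      then show ?thesis using True ll by auto
    next
      case False
      then show ?thesis using d less.prems by auto
    qed
  qed
qed

lemma RightChain: "i \<in> {1..n} \<Longrightarrow> 0 < a i \<Longrightarrow>
  (\<exists>j\<in>N. i \<le> j \<and> lam j + a i = lam i + a j) \<or> (1 < i \<and> a i = a (i - 1))"
proof (induction i rule: measure_induct_rule[where f="\<lambda>i. n - i"])
  case (less i)
  show ?case
  proof (cases "i \<in> N")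
    case True then show ?thesis by auto
  next
    case False
    then have "degenerate n lam a i" using less.prems by (simp add: N_def)
    then have d: "(i = 1 \<and> a 1 = 0) \<or> (1 < i \<and> a i = a (i - 1)) \<or> (i < n \<and> a (i + 1) + lam i = a i + lam (i + 1))"
      using deg_iff less.prems by blast
    show ?thesis
    proof (cases "i < n \<and> a (i + 1) + lam i = a i + lam (i + 1)")
      case True
      have i1: "i + 1 \<in> {1..n}" "n - (i + 1) < n - i" using True less.prems by auto
      have ll: "lam i < lam (i + 1)" using incr True less.prems by auto
      have ap: "0 < a (i + 1)" using True ll by linarith
      from less.IH[OF i1(2) i1(1) ap]
      have "(\<exists>j\<in>N. i + 1 \<le> j \<and> lam j + a (i + 1) = lam (i + 1) + a j) \<or> (1 < i + 1 \<and> a (i + 1) = a (i + 1 - 1))"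
        by simp
      then show ?thesis using True ll by (auto; fastforce)
    next
      case False
      then show ?thesis using d less.prems by auto
    qed
  qed
qed

lemma Source: "i \<in> {1..n} \<Longrightarrow> i \<notin> N \<Longrightarrow> 0 < a i \<Longrightarrow>
  \<exists>j\<in>N. (j < i \<and> a i \<le> a j) \<or> (i < j \<and> lam j + a i \<le> lam i + a j)"
proof -
  assume i: "i \<in> {1..n}" "i \<notin> N" "0 < a i"
  then have "degenerate n lam a i" by (simp add: N_def)
  then have d: "(1 < i \<and> a i = a (i - 1)) \<or> (i < n \<and> a (i + 1) + lam i = a i + lam (i + 1))"
    using deg_iff i by auto
  show ?thesis
  proof (cases "1 < i \<and> a i = a (i - 1)")
    case True
    have i1: "i - 1 \<in> {1..n}" using True i by auto
    have ll: "lam (i - 1) < lam i" using lam_less[of "i - 1" i] i1 i by auto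
    from LeftChain[OF i1] True i
    have "(\<exists>j\<in>N. j \<le> i - 1 \<and> a j = a (i - 1)) \<or> (i - 1 < n \<and> a (i - 1 + 1) + lam (i - 1) = a (i - 1) + lam (i - 1 + 1))"
      by simp
    then show ?thesis
    proof
      assume "\<exists>j\<in>N. j \<le> i - 1 \<and> a j = a (i - 1)"
      then obtain j where "j \<in> N" "j \<le> i - 1" "a j = a (i - 1)" by blast
      then show ?thesis using True by (intro bexI[of _ j]) auto
    next
      assume "i - 1 < n \<and> a (i - 1 + 1) + lam (i - 1) = a (i - 1) + lam (i - 1 + 1)"
      then show ?thesis using True ll by simp
    qed
  next
    case False
    then have T: "i < n" "a (i + 1) + lam i = a i + lam (i + 1)" using d by auto
    have i1: "i + 1 \<in> {1..n}" using T i by auto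
    have ll: "lam i < lam (i + 1)" using incr T i by auto
    have ap: "0 < a (i + 1)" using T ll by linarith
    from RightChain[OF i1 ap]
    have "(\<exists>j\<in>N. i + 1 \<le> j \<and> lam j + a (i + 1) = lam (i + 1) + a j) \<or> (1 < i + 1 \<and> a (i + 1) = a (i + 1 - 1))"
      by simp
    then show ?thesis
    proof
      assume "\<exists>j\<in>N. i + 1 \<le> j \<and> lam j + a (i + 1) = lam (i + 1) + a j"
      then obtain j where "j \<in> N" "i + 1 \<le> j" "lam j + a (i + 1) = lam (i + 1) + a j" by blast
      then show ?thesis using T by (intro bexI[of _ j]) auto
    next
      assume "1 < i + 1 \<and> a (i + 1) = a (i + 1 - 1)"
      then show ?thesis using T ll by simp
    qed
  qed
qed


lemma sub_part:
  assumes x: "x \<in> typeset p n lam a" and phi: "\<phi> \<in> iso G G"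
  shows "\<phi> x \<in> \<Union> {typeset p n lam b | b.
                 (\<forall>i\<in>{1..n}. b i \<le> a i) \<and>
                 (\<forall>i\<in>{1..n}. \<not> degenerate n lam a i \<longrightarrow> b i = a i)}"
proof -
  have xc: "x \<in> carrier G" using x by (simp add: typeset_def)
  have hom: "\<phi> \<in> hom G G" using phi by (simp add: iso_def)
  define y where "y = \<phi> x"
  have yc: "y \<in> carrier G" using hom xc by (auto simp: y_def hom_def)
  define b where "b i = (SOME f. f \<le> lam i \<and> group.ord (Z i) (y i) = p ^ f)" for i
  have bprop: "b i \<le> lam i \<and> group.ord (Z i) (y i) = p ^ b i" if "i \<in> {1..n}" for i
  proof -
    have "\<exists>f. f \<le> lam i \<and> group.ord (Z i) (y i) = p ^ f"
      using ordZ_ex[OF that] carrier_range[OF yc that] by auto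
    then show ?thesis unfolding b_def by (rule someI_ex)
  qed
  have yb: "y \<in> typeset p n lam b" using yc bprop by (simp add: typeset_def)
  have ble: "b i \<le> a i" if i: "i \<in> {1..n}" for i
  proof -
    have "M i dvd P ^ a i * \<phi> x i"
    proof (rule key[OF hom xc i, where t = a])
      show "\<forall>j\<in>{1..n}. M j dvd P ^ a j * x j" using tdvd[OF x] by blast
      show "\<forall>j\<in>{1..n}. a j \<le> lam j" using a_le by blast
      show "\<forall>j\<in>{1..n}. a j \<le> a i \<or> lam i + a j \<le> a i + lam j"
      proof
        fix j assume j: "j \<in> {1..n}"
        show "a j \<le> a i \<or> lam i + a j \<le> a i + lam j"
        proof (cases "j \<le> i")
          case True then show ?thesis using C1[OF j i] by blast
        next
          case False then show ?thesis using C2[OF i j] by simp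
        qed
      qed
    qed
    then show ?thesis using tdvd[OF yb i] by (simp add: y_def)
  qed
  have beq: "b i = a i" if i: "i \<in> {1..n}" and nd: "\<not> degenerate n lam a i" for i
  proof (rule ccontr)
    assume ne: "b i \<noteq> a i"
    have iN: "i \<in> N" using i nd by (simp add: N_def)
    have apos: "0 < a i" using C5[OF iN] .
    define \<psi> where "\<psi> = inv_into (carrier G) \<phi>"
    have psi: "\<psi> \<in> iso G G" unfolding \<psi>_def using group.iso_set_sym[OF groupG phi] .
    have homp: "\<psi> \<in> hom G G" using psi by (simp add: iso_def)
    have "inj_on \<phi> (carrier G)" using phi by (simp add: iso_def bij_betw_def)
    then have px: "\<psi> y = x" using xc by (simp add: \<psi>_def y_def inv_into_f_f)
    have "M i dvd P ^ (a i - 1) * \<psi> y i"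
    proof (rule key[OF homp yc i, where t = b])
      show "\<forall>j\<in>{1..n}. M j dvd P ^ b j * y j" using tdvd[OF yb] by blast
      show "\<forall>j\<in>{1..n}. b j \<le> lam j" using bprop by blast
      show "\<forall>j\<in>{1..n}. b j \<le> a i - 1 \<or> lam i + b j \<le> a i - 1 + lam j"
      proof
        fix j assume j: "j \<in> {1..n}"
        show "b j \<le> a i - 1 \<or> lam i + b j \<le> a i - 1 + lam j"
        proof (cases "j < i")
          case True then show ?thesis using C4[OF iN _ True] ble[OF j] j by fastforce
        next
          case False
          show ?thesis
          proof (cases "j = i")
            case True then show ?thesis using ble[OF i] ne by (simp; linarith)
          next
            case False
            then have "i < j" using \<open>\<not> j < i\<close> by simp
            then show ?thesis using C3[OF iN] ble[OF j] j apos by fastforce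
          qed
        qed
      qed
    qed
    then have "a i \<le> a i - 1" using tdvd[OF x i] px by simp
    then show False using apos by simp
  qed
  have "typeset p n lam b \<in> {typeset p n lam b | b.
                 (\<forall>i\<in>{1..n}. b i \<le> a i) \<and>
                 (\<forall>i\<in>{1..n}. \<not> degenerate n lam a i \<longrightarrow> b i = a i)}"
    using ble beq by blast
  then show ?thesis using yb unfolding y_def by blast
qed


lemma sup_part:
  assumes x: "x \<in> typeset p n lam a" and y: "y \<in> typeset p n lam b"
    and ble: "\<forall>i\<in>{1..n}. b i \<le> a i"
    and beq: "\<forall>i\<in>{1..n}. \<not> degenerate n lam a i \<longrightarrow> b i = a i"
  shows "y \<in> aut_orbit G x"
proof -
  have xc: "x \<in> carrier G" using x by (simp add: typeset_def)
  have yc: "y \<in> carrier G" using y by (simp add: typeset_def)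
  define Cond where "Cond i u m s \<longleftrightarrow> coprime u (M i) \<and> (m \<noteq> 0 \<longrightarrow> s \<in> N \<and> M i dvd m * M s)
      \<and> (i \<in> N \<longrightarrow> m = 0) \<and> (u * x i + m * x s) mod M i = y i" for i u m s
  have yr: "0 \<le> y i" "y i < M i" if "i \<in> {1..n}" for i using carrier_range[OF yc that] by auto
  have xr: "0 \<le> x i" "x i < M i" if "i \<in> {1..n}" for i using carrier_range[OF xc that] by auto
  have ymod: "(y i + K * M i) mod M i = y i" if "i \<in> {1..n}" for i K
    using yr[OF that] by simp
  have exact: "\<exists>r. x j = P ^ (lam j - a j) * r \<and> \<not> P dvd r" if j: "j \<in> N" for j
  proof -
    have j1: "j \<in> {1..n}" using j N_sub by blast
    show ?thesis
      by (rule EX) (use C5[OF j] a_le[OF j1] tdvd[OF x j1] in auto)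
  qed
  have ex: "\<exists>ums. Cond i (fst ums) (fst (snd ums)) (snd (snd ums))" if i: "i \<in> {1..n}" for i
  proof (cases "i \<in> N")
    case True
    have ai: "0 < a i" using C5[OF True] .
    have bi: "b i = a i" using beq i True by (simp add: N_def)
    obtain r where r: "x i = P ^ (lam i - a i) * r" "\<not> P dvd r" using exact[OF True] by blast
    obtain r' where r': "y i = P ^ (lam i - a i) * r'" "\<not> P dvd r'"
      by (rule exE[OF EX]) (use ai a_le[OF i] tdvd[OF y i] bi in auto)
    obtain v w where vw: "\<not> P dvd v" "v * r = 1 + w * M i"
      using inv_mod[OF r(2), of "lam i"] lam_pos[OF i] by blast
    have "\<not> P dvd r' * v" using r'(2) vw(1) primeP by (simp add: prime_dvd_mult_iff)
    then have cop: "coprime (r' * v) (M i)" by (rule coprime_of)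
    have "r' * v * x i = P ^ (lam i - a i) * r' * (v * r)" using r(1) by (simp add: algebra_simps)
    also have "\<dots> = P ^ (lam i - a i) * r' * (1 + w * M i)" using vw(2) by simp
    also have "\<dots> = y i + (P ^ (lam i - a i) * r' * w) * M i" using r'(1) by (simp add: algebra_simps)
    finally have "r' * v * x i = y i + (P ^ (lam i - a i) * r' * w) * M i" .
    then have "(r' * v * x i + 0 * x 0) mod M i = y i" using ymod[OF i] by simp
    then show ?thesis using cop True unfolding Cond_def by (intro exI[of _ "(r' * v, 0, 0)"]) simp
  next
    case False
    show ?thesis
    proof (cases "a i = 0")
      case True
      have "M i dvd P ^ 0 * x i" using tdvd[OF x i, of 0] True by simp
      then have x0: "x i = 0" using eq_of_dvd[of "x i" "M i" 0] xr[OF i] M_pos by simp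
      have "b i \<le> a i" using ble i by blast
      then have "b i \<le> 0" using True by simp
      then have "M i dvd P ^ 0 * y i" using tdvd[OF y i, of 0] by simp
      then have y0: "y i = 0" using eq_of_dvd[of "y i" "M i" 0] yr[OF i] M_pos by simp
      show ?thesis using False x0 y0 unfolding Cond_def by (intro exI[of _ "(1, 0, 0)"]) simp
    next
      case apos: False
      obtain j where j: "j \<in> N" and jc: "(j < i \<and> a i \<le> a j) \<or> (i < j \<and> lam j + a i \<le> lam i + a j)"
        using Source[OF i False] apos by blast
      have j1: "j \<in> {1..n}" using j N_sub by blast
      obtain r where r: "x j = P ^ (lam j - a j) * r" "\<not> P dvd r" using exact[OF j] by blast
      have Dx: "P ^ (lam i - a i) dvd x i" using D1[of "a i" "lam i" "x i"] a_le[OF i] tdvd[OF x i] by simp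
      have Dy: "P ^ (lam i - a i) dvd y i" using D1[of "a i" "lam i" "y i"] a_le[OF i] tdvd[OF y i] ble i by simp
      have D: "P ^ (lam i - a i) dvd y i - x i" using Dx Dy by simp
      have "\<exists>q. y i - x i = q * P ^ (lam j - a j) \<and> M i dvd q * M j"
      proof (cases "j < i \<and> a i \<le> a j")
        case True
        have ll: "lam j < lam i" using lam_less[OF j1 i] True by simp
        have ajl: "a j \<le> lam j" using a_le[OF j1] .
        have "P ^ (lam i - a j) dvd P ^ (lam i - a i)" using True by (intro le_imp_power_dvd) (simp add: diff_le_mono2)
        then obtain t where t: "y i - x i = P ^ (lam i - a j) * t" using D dvd_trans by blast
        have e1: "P ^ (lam i - a j) = P ^ (lam i - lam j) * P ^ (lam j - a j)"
          using ll ajl by (simp flip: power_add)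
        have e2: "M i = P ^ (lam i - lam j) * M j"
          using ll by (simp flip: power_add)
        show ?thesis
          by (rule exI[of _ "P ^ (lam i - lam j) * t"]) (simp add: t e1 e2 algebra_simps)
      next
        case False
        then have T: "i < j" "lam j + a i \<le> lam i + a j" using jc by auto
        have ll: "lam i < lam j" using lam_less[OF i j1] T by simp
        have "P ^ (lam j - a j) dvd P ^ (lam i - a i)" using T a_le[OF j1] by (intro le_imp_power_dvd) linarith
        then obtain t where t: "y i - x i = P ^ (lam j - a j) * t" using D dvd_trans by blast
        have "M i dvd M j" using ll by (intro le_imp_power_dvd) simp
        then show ?thesis using t by (intro exI[of _ t]) (simp add: mult.commute)
      qed
      then obtain q where q: "y i - x i = q * P ^ (lam j - a j)" "M i dvd q * M j" by blast
      obtain v w where vw: "\<not> P dvd v" "v * r = 1 + w * M i"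
        using inv_mod[OF r(2), of "lam i"] lam_pos[OF i] by blast
      have "q * v * x j = q * P ^ (lam j - a j) * (v * r)" using r(1) by (simp add: algebra_simps)
      also have "\<dots> = q * P ^ (lam j - a j) * (1 + w * M i)" using vw(2) by simp
      also have "\<dots> = (y i - x i) + (q * P ^ (lam j - a j) * w) * M i" using q(1) by (simp add: algebra_simps)
      finally have "q * v * x j = (y i - x i) + (q * P ^ (lam j - a j) * w) * M i" .
      then have "1 * x i + q * v * x j = y i + (q * P ^ (lam j - a j) * w) * M i" by simp
      then have m1: "(1 * x i + q * v * x j) mod M i = y i" using ymod[OF i] by simp
      have m2: "M i dvd q * v * M j" using q(2) by (metis dvd_mult2 mult.assoc mult.commute)
      show ?thesis using m1 m2 j False unfolding Cond_def by (intro exI[of _ "(1, q * v, j)"]) simp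
    qed
  qed
  then have "\<forall>i\<in>{1..n}. \<exists>ums. Cond i (fst ums) (fst (snd ums)) (snd (snd ums))" by blast
  then have "\<exists>F. \<forall>i\<in>{1..n}. Cond i (fst (F i)) (fst (snd (F i))) (snd (snd (F i)))" by (rule bchoice)
  then obtain F where F: "\<forall>i\<in>{1..n}. Cond i (fst (F i)) (fst (snd (F i))) (snd (snd (F i)))" by blast
  define u where "u i = fst (F i)" for i
  define m where "m i = fst (snd (F i))" for i
  define s where "s i = snd (snd (F i))" for i
  have C: "Cond i (u i) (m i) (s i)" if "i \<in> {1..n}" for i using F that by (simp add: u_def m_def s_def)
  have iso: "(\<lambda>z. \<lambda>i\<in>{1..n}. (u i * z i + m i * z (s i)) mod M i) \<in> iso G G"
  proof (rule phi_iso[OF N_sub])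
    show "\<forall>i\<in>{1..n}. coprime (u i) (M i)" using C by (simp add: Cond_def)
    show "\<forall>i\<in>{1..n}. m i \<noteq> 0 \<longrightarrow> s i \<in> N \<and> M i dvd m i * M (s i)" using C by (simp add: Cond_def)
    show "\<forall>i\<in>N. m i = 0" using C N_sub unfolding Cond_def by blast
  qed
  have "(\<lambda>i\<in>{1..n}. (u i * x i + m i * x (s i)) mod M i) = y"
    using yc C by (intro extensionalityI[of _ "{1..n}"]) (auto simp: carrierG PiE_iff Cond_def)
  then show ?thesis using iso unfolding aut_orbit_def by (metis (no_types, lifting) image_eqI)
qed

end

theorem mainTheorem6:
  fixes p n :: nat and lam a :: "nat \<Rightarrow> nat"
  assumes "prime p"
    and "0 < lam 1"
    and "\<forall>i\<in>{1..<n}. lam i < lam (i + 1)"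
    and "canonical n lam a"
  shows "\<forall>x\<in>typeset p n lam a.
           aut_orbit (abgrp p n lam) x =
           \<Union> {typeset p n lam b | b.
                 (\<forall>i\<in>{1..n}. b i \<le> a i) \<and>
                 (\<forall>i\<in>{1..n}. \<not> degenerate n lam a i \<longrightarrow> b i = a i)}"
proof -
  interpret abga p n lam a using assms by unfold_locales auto
  show ?thesis
  proof
    fix x assume x: "x \<in> typeset p n lam a"
    show "aut_orbit (abgrp p n lam) x = \<Union> {typeset p n lam b | b.
                 (\<forall>i\<in>{1..n}. b i \<le> a i) \<and>
                 (\<forall>i\<in>{1..n}. \<not> degenerate n lam a i \<longrightarrow> b i = a i)}"
    proof
      show "aut_orbit (abgrp p n lam) x \<subseteq> \<Union> {typeset p n lam b | b.
                 (\<forall>i\<in>{1..n}. b i \<le> a i) \<and>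
                 (\<forall>i\<in>{1..n}. \<not> degenerate n lam a i \<longrightarrow> b i = a i)}"
        using sub_part[OF x] by (auto simp: aut_orbit_def)
      show "\<Union> {typeset p n lam b | b.
                 (\<forall>i\<in>{1..n}. b i \<le> a i) \<and>
                 (\<forall>i\<in>{1..n}. \<not> degenerate n lam a i \<longrightarrow> b i = a i)} \<subseteq> aut_orbit (abgrp p n lam) x"
        using sup_part[OF x] by blast
    qed
  qed
qed

end
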